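(* Let $G$ be a tree with $n\ge k$ vertices and $k\in\{2,3\}$. Then every transition edge between two adjacent configurations of $k$ agents with distinct vertex sets is a $1$-transition edge, and consequently $h^r_k(G)=h_k(G)$.
   Context: All graphs are finite, simple, undirected and connected. A configuration of $k$ agents is a $k$-tuple $(v_1,\dots,v_k)$ of pairwise distinct vertices of $G$ whose induced subgraph is connected; it is identified with its vertex set when convenient. Two configurations $(v_1,\dots,v_k)$, $(v'_1,\dots,v'_k)$ are adjacent if for every $i$ either $v_i=v'_i$ or $(v_i,v'_i)\in E$. The transition edge between adjacent configurations $\mathcal C,\mathcal C'$ is an $r$-transition edge if exactly $r$ vertices of $\mathcal C'$ are not in $\mathcal C$. A transition walk of length $l$ is a sequence $\mathcal C_0,\dots,\mathcal C_l$ of configurations with consecutive ones adjacent; it is spanning if every vertex of $G$ lies in some $\mathcal C_t$. $h_k(G)$ is the minimum length of a spanning transition walk with $k$ agents. $h^r_k(G)$ is the minimum length of a spanning transition walk with $k$ agents in which every pair of consecutive configurations is joined by a $1$-transition edge (the restricted problem $k$-RHWP). *)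

theory Defs
  imports Main
begin

definition simple_graph :: "'a set \<Rightarrow> ('a \<Rightarrow> 'a \<Rightarrow> bool) \<Rightarrow> bool" where
  "simple_graph V E \<longleftrightarrow> finite V \<and> (\<forall>x y. E x y \<longrightarrow> x \<in> V \<and> y \<in> V)
     \<and> (\<forall>x y. E x y \<longrightarrow> E y x) \<and> (\<forall>x. \<not> E x x)"

definition induced_connected :: "('a \<Rightarrow> 'a \<Rightarrow> bool) \<Rightarrow> 'a set \<Rightarrow> bool" where
  "induced_connected E S \<longleftrightarrow>
     (\<forall>x\<in>S. \<forall>y\<in>S. (\<lambda>a b. a \<in> S \<and> b \<in> S \<and> E a b)\<^sup>*\<^sup>* x y)"

definition is_cycle :: "'a set \<Rightarrow> ('a \<Rightarrow> 'a \<Rightarrow> bool) \<Rightarrow> 'a list \<Rightarrow> bool" where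
  "is_cycle V E vs \<longleftrightarrow> length vs \<ge> 3 \<and> distinct vs \<and> set vs \<subseteq> V
     \<and> (\<forall>i. Suc i < length vs \<longrightarrow> E (vs ! i) (vs ! Suc i)) \<and> E (last vs) (hd vs)"

definition is_tree :: "'a set \<Rightarrow> ('a \<Rightarrow> 'a \<Rightarrow> bool) \<Rightarrow> bool" where
  "is_tree V E \<longleftrightarrow> simple_graph V E \<and> V \<noteq> {} \<and> induced_connected E V
     \<and> \<not> (\<exists>vs. is_cycle V E vs)"

definition configuration :: "'a set \<Rightarrow> ('a \<Rightarrow> 'a \<Rightarrow> bool) \<Rightarrow> nat \<Rightarrow> 'a list \<Rightarrow> bool" where
  "configuration V E k C \<longleftrightarrow> length C = k \<and> distinct C \<and> set C \<subseteq> V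
     \<and> induced_connected E (set C)"

definition conf_adjacent :: "('a \<Rightarrow> 'a \<Rightarrow> bool) \<Rightarrow> 'a list \<Rightarrow> 'a list \<Rightarrow> bool" where
  "conf_adjacent E C C' \<longleftrightarrow> list_all2 (\<lambda>v v'. v = v' \<or> E v v') C C'"

text \<open>The transition edge C--C' is an r-transition edge iff exactly r vertices of C'
  are not in C.\<close>
definition transition_number :: "'a list \<Rightarrow> 'a list \<Rightarrow> nat" where
  "transition_number C C' = card (set C' - set C)"

definition transition_walk :: "'a set \<Rightarrow> ('a \<Rightarrow> 'a \<Rightarrow> bool) \<Rightarrow> nat \<Rightarrow> 'a list list \<Rightarrow> bool" where
  "transition_walk V E k cs \<longleftrightarrow> cs \<noteq> [] \<and> (\<forall>C\<in>set cs. configuration V E k C)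
     \<and> (\<forall>i. Suc i < length cs \<longrightarrow> conf_adjacent E (cs ! i) (cs ! Suc i))"

definition spanning_walk :: "'a set \<Rightarrow> 'a list list \<Rightarrow> bool" where
  "spanning_walk V cs \<longleftrightarrow> V \<subseteq> (\<Union>C\<in>set cs. set C)"

definition restricted_walk :: "'a list list \<Rightarrow> bool" where
  "restricted_walk cs \<longleftrightarrow>
     (\<forall>i. Suc i < length cs \<longrightarrow> transition_number (cs ! i) (cs ! Suc i) = 1)"

definition h :: "'a set \<Rightarrow> ('a \<Rightarrow> 'a \<Rightarrow> bool) \<Rightarrow> nat \<Rightarrow> nat" where
  "h V E k = (LEAST l. \<exists>cs. transition_walk V E k cs \<and> spanning_walk V cs
                            \<and> length cs = Suc l)"

definition hr :: "'a set \<Rightarrow> ('a \<Rightarrow> 'a \<Rightarrow> bool) \<Rightarrow> nat \<Rightarrow> nat" where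
  "hr V E k = (LEAST l. \<exists>cs. transition_walk V E k cs \<and> spanning_walk V cs
                             \<and> restricted_walk cs \<and> length cs = Suc l)"

end

theory Submission
  imports Defs
begin

lemma tree_sym: "is_tree V E \<Longrightarrow> E x y \<Longrightarrow> E y x"
  unfolding is_tree_def simple_graph_def by blast

lemma tree_irr: "is_tree V E \<Longrightarrow> \<not> E x x"
  unfolding is_tree_def simple_graph_def by blast

lemma tree_in: "is_tree V E \<Longrightarrow> E x y \<Longrightarrow> x \<in> V"
  unfolding is_tree_def simple_graph_def by blast

lemma tree_nocyc: "is_tree V E \<Longrightarrow> is_cycle V E vs \<Longrightarrow> False"
  unfolding is_tree_def by blast

lemma cyc3: assumes t: "is_tree V E" and "E x1 x2" "E x2 x3" "E x3 x1" "distinct [x1,x2,x3]"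
  shows False
proof -
  have "is_cycle V E [x1,x2,x3]" unfolding is_cycle_def
    using assms tree_in[OF t] by (auto simp: less_Suc_eq)
  then show False using tree_nocyc[OF t] by blast
qed

lemma cyc4: assumes t: "is_tree V E" and "E x1 x2" "E x2 x3" "E x3 x4" "E x4 x1" "distinct [x1,x2,x3,x4]"
  shows False
proof -
  have "is_cycle V E [x1,x2,x3,x4]" unfolding is_cycle_def
    using assms tree_in[OF t] by (auto simp: less_Suc_eq)
  then show False using tree_nocyc[OF t] by blast
qed

lemma cyc5: assumes t: "is_tree V E" and "E x1 x2" "E x2 x3" "E x3 x4" "E x4 x5" "E x5 x1"
  "distinct [x1,x2,x3,x4,x5]"
  shows False
proof -
  have "is_cycle V E [x1,x2,x3,x4,x5]" unfolding is_cycle_def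
    using assms tree_in[OF t] by (auto simp: less_Suc_eq)
  then show False using tree_nocyc[OF t] by blast
qed

lemma cyc6: assumes t: "is_tree V E" and "E x1 x2" "E x2 x3" "E x3 x4" "E x4 x5" "E x5 x6" "E x6 x1"
  "distinct [x1,x2,x3,x4,x5,x6]"
  shows False
proof -
  have "is_cycle V E [x1,x2,x3,x4,x5,x6]" unfolding is_cycle_def
    using assms tree_in[OF t] by (auto simp: less_Suc_eq)
  then show False using tree_nocyc[OF t] by blast
qed

lemma core3:
  assumes t: "is_tree V E" and d: "distinct [a,b,c]" "distinct [a',b',c']"
    and n: "a' \<notin> {a,b,c}" "b' \<notin> {a,b,c}"
    and m: "E a a'" "E b b'" "c' = c \<or> E c c'"
    and C: "E a b \<or> E a c" "E b a \<or> E b c" "E c a \<or> E c b"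
    and C': "E a' b' \<or> E a' c'" "E b' a' \<or> E b' c'" "E c' a' \<or> E c' b'"
  shows False
proof -
  note sym = tree_sym[OF t]
  have C2: "E a b \<or> (E a c \<and> E b c)" using C sym by blast
  have C2': "E a' b' \<or> (E a' c' \<and> E b' c')" using C' sym by blast
  show False
  proof (cases "E a' b'")
    case True
    show False
    proof (cases "E a b")
      case True
      then show False using cyc4[OF t, of a a' b' b] \<open>E a' b'\<close> m sym d n by auto
    next
      case False
      then show False using C2 cyc5[OF t, of a a' b' b c] \<open>E a' b'\<close> m sym d n by auto
    qed
  next
    case False
    then have ac: "E a' c'" and bc: "E b' c'" using C2' by auto
    show False
    proof (cases "c' \<in> {a,b,c}")
      case False
      show False
      proof (cases "E a b")
        case True
        then show False using cyc5[OF t, of a a' c' b' b] ac bc m sym d n False by auto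
      next
        case F2: False
        then show False using C2 cyc6[OF t, of a a' c' b' b c] ac bc m sym d n False by auto
      qed
    next
      case True
      then consider "c' = a" | "c' = b" | "c' = c" by blast
      then show False
      proof cases
        case 1
        then show False using C2 cyc3[OF t, of a b' b] cyc4[OF t, of a b' b c] ac bc m sym d n
          by auto
      next
        case 2
        then show False using C2 cyc3[OF t, of a a' b] cyc4[OF t, of a a' b c] ac bc m sym d n
          by auto
      next
        case 3
        then show False using C2 cyc5[OF t, of a a' c b' b] cyc3[OF t, of a a' c] ac bc m sym d n
          by auto
      qed
    qed
  qed
qed

lemma core2:
  assumes t: "is_tree V E" and "a \<noteq> b" "a' \<noteq> b'" "a' \<notin> {a,b}" "b' \<notin> {a,b}"
    "E a a'" "E b b'" "E a b" "E a' b'"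
  shows False
  using cyc4[OF t, of a a' b' b] assms tree_sym[OF t] by auto

lemma nbr: "induced_connected E S \<Longrightarrow> x \<in> S \<Longrightarrow> y \<in> S \<Longrightarrow> x \<noteq> y \<Longrightarrow> \<exists>z\<in>S. E x z"
  unfolding induced_connected_def
  by (metis (no_types, lifting) converse_rtranclpE)

lemma tn_ge1:
  assumes "distinct C" "distinct C'" "length C = length C'" "set C \<noteq> set C'"
  shows "transition_number C C' \<ge> 1"
proof -
  have "card (set C) = card (set C')" using assms by (simp add: distinct_card)
  have "set C' - set C \<noteq> {}"
  proof
    assume "set C' - set C = {}"
    then have "set C' \<subseteq> set C" by blast
    then have "set C' = set C" using \<open>card (set C) = card (set C')\<close>
      by (simp add: card_subset_eq)
    then show False using assms by simp
  qed
  then show ?thesis unfolding transition_number_def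
    by (simp add: Suc_le_eq card_gt_0_iff)
qed

lemma two_elems: "finite A \<Longrightarrow> \<not> card A \<le> 1 \<Longrightarrow> \<exists>x\<in>A. \<exists>y\<in>A. x \<noteq> y"
  using card_le_Suc0_iff_eq by fastforce

lemma part1:
  assumes t: "is_tree V E" and k: "k \<in> {2,3}"
    and cC: "configuration V E k C" and cC': "configuration V E k C'"
    and adj: "conf_adjacent E C C'" and ne: "set C \<noteq> set C'"
  shows "transition_number C C' = 1"
proof -
  note sym = tree_sym[OF t]
  note irr = tree_irr[OF t]
  have le: "transition_number C C' \<le> 1"
  proof (rule ccontr)
    assume "\<not> transition_number C C' \<le> 1"
    then obtain x y where xy: "x \<in> set C' - set C" "y \<in> set C' - set C" "x \<noteq> y"
      using two_elems[of "set C' - set C"] unfolding transition_number_def by auto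
    show False
    proof (cases "k = 2")
      case True
      then obtain a b a' b' where ab: "C = [a,b]" "C' = [a',b']"
        using cC cC' unfolding configuration_def by (auto simp: length_Suc_conv numeral_eq_Suc)
      have d: "a \<noteq> b" "a' \<noteq> b'" using cC cC' ab unfolding configuration_def by auto
      have e1: "E a b" using nbr[of E "{a,b}" a b] cC ab d irr unfolding configuration_def by auto
      have e2: "E a' b'" using nbr[of E "{a',b'}" a' b'] cC' ab d irr unfolding configuration_def by auto
      have n: "a' \<notin> {a,b}" "b' \<notin> {a,b}" using xy ab by auto
      have m: "E a a'" "E b b'" using adj ab n unfolding conf_adjacent_def by auto
      show False using core2[OF t d n m e1 e2] .
    next
      case False
      then have k3: "k = 3" using k by auto
      then obtain a b c a' b' c' where ab: "C = [a,b,c]" "C' = [a',b',c']"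
        using cC cC' unfolding configuration_def by (auto simp: length_Suc_conv numeral_eq_Suc)
      have d: "distinct [a,b,c]" "distinct [a',b',c']"
        using cC cC' ab unfolding configuration_def by auto
      have ic: "induced_connected E {a,b,c}" "induced_connected E {a',b',c'}"
        using cC cC' ab unfolding configuration_def by auto
      have C: "E a b \<or> E a c" "E b a \<or> E b c" "E c a \<or> E c b"
        using nbr[OF ic(1), of a b] nbr[OF ic(1), of b a] nbr[OF ic(1), of c a] d irr by auto
      have C': "E a' b' \<or> E a' c'" "E b' a' \<or> E b' c'" "E c' a' \<or> E c' b'"
        using nbr[OF ic(2), of a' b'] nbr[OF ic(2), of b' a'] nbr[OF ic(2), of c' a'] d irr by auto
      have m: "a' = a \<or> E a a'" "b' = b \<or> E b b'" "c' = c \<or> E c c'"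
        using adj ab unfolding conf_adjacent_def by auto
      have "(a' \<notin> {a,b,c} \<and> b' \<notin> {a,b,c}) \<or> (a' \<notin> {a,b,c} \<and> c' \<notin> {a,b,c})
            \<or> (b' \<notin> {a,b,c} \<and> c' \<notin> {a,b,c})"
        using xy ab by auto
      then show False
      proof (elim disjE conjE)
        assume n: "a' \<notin> {a,b,c}" "b' \<notin> {a,b,c}"
        show False
          by (rule core3[OF t d n]) (use m n C C' in auto)
      next
        assume n: "a' \<notin> {a,b,c}" "c' \<notin> {a,b,c}"
        show False
          by (rule core3[OF t, of a c b a' c' b']) (use d m n C C' in auto)
      next
        assume n: "b' \<notin> {a,b,c}" "c' \<notin> {a,b,c}"
        show False
          by (rule core3[OF t, of b c a b' c' a']) (use d m n C C' in auto)
      qed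
    qed
  qed
  have "transition_number C C' \<ge> 1"
    using tn_ge1[of C C'] cC cC' ne unfolding configuration_def by auto
  with le show ?thesis by simp
qed

lemma all_steps_cons:
  "(\<forall>i. Suc i < length (x#y#r) \<longrightarrow> P ((x#y#r)!i) ((x#y#r)!Suc i)) \<longleftrightarrow>
   P x y \<and> (\<forall>i. Suc i < length (y#r) \<longrightarrow> P ((y#r)!i) ((y#r)!Suc i))"
proof
  assume H: "\<forall>i. Suc i < length (x#y#r) \<longrightarrow> P ((x#y#r)!i) ((x#y#r)!Suc i)"
  have "P x y" using H[rule_format, of 0] by simp
  moreover have "\<forall>i. Suc i < length (y#r) \<longrightarrow> P ((y#r)!i) ((y#r)!Suc i)"
  proof (intro allI impI)
    fix i assume "Suc i < length (y#r)"
    then show "P ((y#r)!i) ((y#r)!Suc i)" using H[rule_format, of "Suc i"] by simp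
  qed
  ultimately show "P x y \<and> (\<forall>i. Suc i < length (y#r) \<longrightarrow> P ((y#r)!i) ((y#r)!Suc i))" by blast
next
  assume H: "P x y \<and> (\<forall>i. Suc i < length (y#r) \<longrightarrow> P ((y#r)!i) ((y#r)!Suc i))"
  show "\<forall>i. Suc i < length (x#y#r) \<longrightarrow> P ((x#y#r)!i) ((x#y#r)!Suc i)"
  proof (intro allI impI)
    fix i assume "Suc i < length (x#y#r)"
    then show "P ((x#y#r)!i) ((x#y#r)!Suc i)" using H by (cases i) auto
  qed
qed

lemma tw_single: "transition_walk V E k [C] \<longleftrightarrow> configuration V E k C"
  unfolding transition_walk_def by auto

lemma tw_cons: "transition_walk V E k (C#C'#r) \<longleftrightarrow>
   configuration V E k C \<and> conf_adjacent E C C' \<and> transition_walk V E k (C'#r)"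
  unfolding transition_walk_def
  using all_steps_cons[where P="conf_adjacent E" and x=C and y=C' and r=r] by auto

lemma rw_single: "restricted_walk [C]"
  unfolding restricted_walk_def by auto

lemma rw_cons: "restricted_walk (C#C'#r) \<longleftrightarrow>
   transition_number C C' = 1 \<and> restricted_walk (C'#r)"
  unfolding restricted_walk_def
  using all_steps_cons[where P="\<lambda>a b. transition_number a b = 1" and x=C and y=C' and r=r] by auto

lemma relabel1:
  assumes dX: "distinct X" and dY: "distinct Y" and l: "length X = length Y"
    and dZ: "distinct Z" and sZ: "set Z = set X" and adj: "conf_adjacent E X Y"
  shows "\<exists>Y'. conf_adjacent E Z Y' \<and> distinct Y' \<and> set Y' = set Y \<and> length Y' = length Z"
proof -
  define f where "f = (\<lambda>z. the (map_of (zip X Y) z))"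
  have fi: "f (X!i) = Y!i" if "i < length X" for i
    using map_of_zip_nth[OF l dX] that l unfolding f_def by simp
  have fX: "map f X = Y" by (rule nth_equalityI) (use l fi in auto)
  have inj: "inj_on f (set X)" using dY fX distinct_map by metis
  have P: "\<forall>x\<in>set X. x = f x \<or> E x (f x)"
  proof
    fix x assume "x \<in> set X"
    then obtain i where i: "i < length X" "x = X!i" by (metis in_set_conv_nth)
    have "X!i = Y!i \<or> E (X!i) (Y!i)" using adj i l unfolding conf_adjacent_def
      by (simp add: list_all2_conv_all_nth)
    then show "x = f x \<or> E x (f x)" using fi i by simp
  qed
  have "conf_adjacent E Z (map f Z)"
    unfolding conf_adjacent_def list_all2_map2
    by (rule list.rel_refl_strong) (use P sZ in auto)
  moreover have "distinct (map f Z)" using dZ inj sZ by (simp add: distinct_map)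
  moreover have "set (map f Z) = set Y" using sZ fX by (metis list.set_map)
  ultimately show ?thesis by auto
qed

lemma relabel_walk:
  "transition_walk V E k (D#ds) \<Longrightarrow> configuration V E k Z \<Longrightarrow> set Z = set D \<Longrightarrow>
   \<exists>es. transition_walk V E k (Z#es) \<and> map set (Z#es) = map set (D#ds)"
proof (induction ds arbitrary: D Z)
  case Nil
  then show ?case by (auto simp: tw_single)
next
  case (Cons D' ds)
  have cD: "configuration V E k D" and a: "conf_adjacent E D D'" and w: "transition_walk V E k (D'#ds)"
    using Cons.prems(1) by (auto simp: tw_cons)
  have cD': "configuration V E k D'" using w by (simp add: transition_walk_def)
  obtain Y' where Y': "conf_adjacent E Z Y'" "distinct Y'" "set Y' = set D'" "length Y' = length Z"
    using relabel1[of D D' Z E] cD cD' Cons.prems a unfolding configuration_def by auto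
  have cY': "configuration V E k Y'" using Y' cD' Cons.prems(2) unfolding configuration_def by auto
  obtain es where es: "transition_walk V E k (Y'#es)" "map set (Y'#es) = map set (D'#ds)"
    using Cons.IH[OF w cY' Y'(3)] by blast
  have "transition_walk V E k (Z#Y'#es)" using es(1) Cons.prems(2) Y'(1) by (simp add: tw_cons)
  moreover have "map set (Z#Y'#es) = map set (D#D'#ds)" using es(2) Cons.prems(3) by simp
  ultimately show ?case by blast
qed

fun nzs :: "'a set list \<Rightarrow> bool" where
  "nzs (A#B#r) = (A \<noteq> B \<and> nzs (B#r))"
| "nzs _ = True"

lemma union_map_set: "map set xs = map set ys \<Longrightarrow> (\<Union>C\<in>set xs. set C) = (\<Union>C\<in>set ys. set C)"
  by (metis list.set_map)

lemma shorten:
  "transition_walk V E k cs \<Longrightarrow> \<exists>ds. transition_walk V E k ds \<and> length ds \<le> length cs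
     \<and> set (hd ds) = set (hd cs) \<and> (\<Union>C\<in>set ds. set C) = (\<Union>C\<in>set cs. set C) \<and> nzs (map set ds)"
proof (induction cs rule: induct_list012)
  case 1
  then show ?case by (simp add: transition_walk_def)
next
  case (2 x)
  then show ?case by (intro exI[of _ "[x]"]) auto
next
  case (3 x y zs)
  have cx: "configuration V E k x" and a: "conf_adjacent E x y" and w: "transition_walk V E k (y#zs)"
    using "3.prems" by (auto simp: tw_cons)
  have cy: "configuration V E k y" using w by (simp add: transition_walk_def)
  obtain ds where ds: "transition_walk V E k ds" "length ds \<le> length (y#zs)"
    "set (hd ds) = set y" "(\<Union>C\<in>set ds. set C) = (\<Union>C\<in>set (y#zs). set C)" "nzs (map set ds)"
    using "3.IH"(2)[OF w] by auto
  obtain D ds' where Dd: "ds = D#ds'" using ds(1) by (cases ds) (auto simp: transition_walk_def)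
  show ?case
  proof (cases "set x = set y")
    case True
    obtain fs where fs: "transition_walk V E k (x#fs)" "map set (x#fs) = map set (D#ds')"
      using relabel_walk[of V E k D ds' x] ds Dd cx True by auto
    show ?thesis
    proof (intro exI[of _ "x#fs"] conjI)
      have "length (x#fs) = length (D#ds')" using arg_cong[OF fs(2), of length] by simp
      then show "length (x#fs) \<le> length (x#y#zs)" using ds(2) Dd by simp
      show "(\<Union>C\<in>set (x#fs). set C) = (\<Union>C\<in>set (x#y#zs). set C)"
        using union_map_set[OF fs(2)] ds(4) Dd True by auto
      show "nzs (map set (x#fs))" using fs(2) ds(5) Dd by simp
    qed (use fs in auto)
  next
    case False
    obtain es where es: "transition_walk V E k (y#es)" "map set (y#es) = map set (D#ds')"
      using relabel_walk[of V E k D ds' y] ds Dd cy by auto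
    show ?thesis
    proof (intro exI[of _ "x#y#es"] conjI)
      show "transition_walk V E k (x#y#es)" using es(1) cx a by (simp add: tw_cons)
      have "length (y#es) = length (D#ds')" using arg_cong[OF es(2), of length] by simp
      then show "length (x#y#es) \<le> length (x#y#zs)" using ds(2) Dd by simp
      show "(\<Union>C\<in>set (x#y#es). set C) = (\<Union>C\<in>set (x#y#zs). set C)"
        using union_map_set[OF es(2)] ds(4) Dd by auto
      show "nzs (map set (x#y#es))" using es(2) ds(5) Dd False by simp
    qed simp
  qed
qed


lemma nzs_restricted:
  assumes t: "is_tree V E" and k: "k \<in> {2,3}"
  shows "transition_walk V E k cs \<Longrightarrow> nzs (map set cs) \<Longrightarrow> restricted_walk cs"
proof (induction cs rule: induct_list012)
  case 1
  then show ?case by (simp add: restricted_walk_def)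
next
  case (2 x)
  then show ?case by (simp add: rw_single)
next
  case (3 x y zs)
  have cx: "configuration V E k x" and a: "conf_adjacent E x y" and w: "transition_walk V E k (y#zs)"
    using "3.prems" by (auto simp: tw_cons)
  have cy: "configuration V E k y" using w by (simp add: transition_walk_def)
  have "transition_number x y = 1" using part1[OF t k cx cy a] "3.prems"(2) by simp
  then show ?case using "3.IH"(2)[OF w] "3.prems"(2) by (simp add: rw_cons)
qed

theorem mainTheorem4:
  fixes V :: "'a set" and E :: "'a \<Rightarrow> 'a \<Rightarrow> bool" and k :: nat
  assumes "is_tree V E"
    and "card V \<ge> k"
    and "k \<in> {2, 3}"
  shows "(\<forall>C C'. configuration V E k C \<and> configuration V E k C' \<and> conf_adjacent E C C'
            \<and> set C \<noteq> set C' \<longrightarrow> transition_number C C' = 1)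
         \<and> hr V E k = h V E k"
proof
  show "\<forall>C C'. configuration V E k C \<and> configuration V E k C' \<and> conf_adjacent E C C'
            \<and> set C \<noteq> set C' \<longrightarrow> transition_number C C' = 1"
    using part1[OF assms(1) assms(3)] by blast
  define P where "P = (\<lambda>l. \<exists>cs. transition_walk V E k cs \<and> spanning_walk V cs \<and> length cs = Suc l)"
  define Q where "Q = (\<lambda>l. \<exists>cs. transition_walk V E k cs \<and> spanning_walk V cs
                             \<and> restricted_walk cs \<and> length cs = Suc l)"
  have hd: "h V E k = Least P" unfolding h_def P_def by simp
  have hrd: "hr V E k = Least Q" unfolding hr_def Q_def by simp
  have QP: "Q l \<Longrightarrow> P l" for l unfolding P_def Q_def by blast
  have PQ: "P l \<Longrightarrow> \<exists>l'\<le>l. Q l'" for l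
  proof -
    assume "P l"
    then obtain cs where cs: "transition_walk V E k cs" "spanning_walk V cs" "length cs = Suc l"
      unfolding P_def by blast
    obtain ds where ds: "transition_walk V E k ds" "length ds \<le> length cs"
      "(\<Union>C\<in>set ds. set C) = (\<Union>C\<in>set cs. set C)" "nzs (map set ds)"
      using shorten[OF cs(1)] by blast
    have r: "restricted_walk ds" using nzs_restricted[OF assms(1) assms(3) ds(1) ds(4)] .
    have sp: "spanning_walk V ds" using cs(2) ds(3) unfolding spanning_walk_def by simp
    have ne: "ds \<noteq> []" using ds(1) unfolding transition_walk_def by simp
    have "Q (length ds - 1)" unfolding Q_def using ds(1) sp r ne
      by (intro exI[of _ ds]) auto
    moreover have "length ds - 1 \<le> l" using ds(2) cs(3) by simp
    ultimately show ?thesis by blast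
  qed
  show "hr V E k = h V E k"
  proof (cases "\<exists>l. P l")
    case True
    then have pl: "P (Least P)" by (metis LeastI)
    obtain l' where l': "l' \<le> Least P" "Q l'" using PQ[OF pl] by blast
    have q1: "Least Q \<le> l'" using l'(2) by (rule Least_le)
    have q2: "Q (Least Q)" using l'(2) by (metis LeastI)
    have "Least P \<le> Least Q" using QP[OF q2] by (rule Least_le)
    then show ?thesis using hd hrd q1 l'(1) by simp
  next
    case False
    then have "P = (\<lambda>_. False)" "Q = (\<lambda>_. False)" using QP by auto
    then show ?thesis using hd hrd by simp
  qed
qed

end
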